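(* Write $\log\mathbb{E}[z^B]=\sum_{k\ge0}q_kz^k$ for the Taylor expansion around $z=0$. Then $$q_0=\frac{N\mu}{\gamma}\left[\frac1N\,{}_2F_1\!\left(1,\gamma;1+\gamma;N^{-1/\gamma}q\right)-{}_2F_1\!\left(1,\gamma;1+\gamma;q\right)\right],$$ and for $k\ge1$ $$q_k=\mu\sum_{j=1}^{k}\binom{k-1}{j-1}\frac{1}{j+\gamma}\left(\frac{1-q}{q-N^{1/\gamma}}\right)^{j}{}_2F_1\!\left(1,\gamma;1+\gamma+j;N^{-1/\gamma}q\right)+N\mu\,\frac{(k-1)!}{(\gamma+1)_k}\,{}_2F_1\!\left(k,\gamma;1+\gamma+k;q\right).$$ Consequently the probabilities $p_n=\mathbb{P}(B=n)$ satisfy $p_0=e^{q_0}$ and $p_n=\frac1n\sum_{k=0}^{n-1}(n-k)\,q_{n-k}\,p_k$ for $n\ge1$.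
   Context: Model: fix $\delta>0$, $\nu>0$ and $\alpha>\beta\ge 0$, and put $\lambda=\alpha-\beta>0$. The wild-type population is deterministic, of size $e^{\delta t}$ at time $t\ge0$. Mutants arise at the points of an inhomogeneous Poisson process on $[0,\infty)$ with intensity $\nu e^{\delta t}$. Each mutant arising at time $s$ founds a clone that evolves as a linear birth–death process started from one cell, with per-capita birth rate $\alpha$ and death rate $\beta$. Clones are independent of each other and of the Poisson process. For $N>1$ let $\tau=\log N/\delta$, and let $B$ be the total number of mutant cells alive at time $\tau$. Notation: $q=\beta/\alpha\in[0,1)$, $\gamma=\delta/\lambda$, $\mu=\nu/\alpha$. ${}_2F_1(a,b;c;x)=\sum_{n\ge0}\frac{(a)_n(b)_n}{(c)_n}\frac{x^n}{n!}$ is the Gauss hypergeometric function, and $(a)_n=\Gamma(a+n)/\Gamma(a)$ is the Pochhammer symbol. *)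

theory Defs
  imports "HOL-Analysis.Analysis"
begin

definition hyp2F1 :: "real \<Rightarrow> real \<Rightarrow> real \<Rightarrow> real \<Rightarrow> real" where
  "hyp2F1 a b c x =
     (\<Sum>n. pochhammer a n * pochhammer b n / pochhammer c n * x ^ n / fact n)"

text \<open>Law of a linear birth-death process (birth rate al, death rate be, al > be >= 0)
  started from one cell, observed at age t >= 0 (Kendall's explicit solution):
  P(X_t = 0) = xi(t), P(X_t = n) = (1 - xi(t)) (1 - eta(t)) eta(t)^(n-1) for n >= 1.\<close>
definition bd_xi :: "real \<Rightarrow> real \<Rightarrow> real \<Rightarrow> real" where
  "bd_xi al be t = be * (exp ((al - be) * t) - 1) / (al * exp ((al - be) * t) - be)"

definition bd_eta :: "real \<Rightarrow> real \<Rightarrow> real \<Rightarrow> real" where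
  "bd_eta al be t = al * (exp ((al - be) * t) - 1) / (al * exp ((al - be) * t) - be)"

definition bd_pmf :: "real \<Rightarrow> real \<Rightarrow> real \<Rightarrow> nat \<Rightarrow> real" where
  "bd_pmf al be t n =
     (if n = 0 then bd_xi al be t
      else (1 - bd_xi al be t) * (1 - bd_eta al be t) * bd_eta al be t ^ (n - 1))"

text \<open>Total Poisson intensity of mutations on [0,T]: integral of nu e^(de s).\<close>
definition mut_mass :: "real \<Rightarrow> real \<Rightarrow> real \<Rightarrow> real" where
  "mut_mass de nu T = integral {0..T} (\<lambda>s. nu * exp (de * s))"

text \<open>Law of the size at time T of a single clone founded at a time distributed with
  density proportional to nu e^(de s) on [0,T] (the law of one Poisson point).\<close>
definition clone_pmf :: "real \<Rightarrow> real \<Rightarrow> real \<Rightarrow> real \<Rightarrow> real \<Rightarrow> nat \<Rightarrow> real" where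
  "clone_pmf de nu al be T n =
     integral {0..T} (\<lambda>s. nu * exp (de * s) * bd_pmf al be (T - s) n) / mut_mass de nu T"

fun conv_pow :: "(nat \<Rightarrow> real) \<Rightarrow> nat \<Rightarrow> nat \<Rightarrow> real" where
  "conv_pow c 0 n = (if n = 0 then 1 else 0)"
| "conv_pow c (Suc m) n = (\<Sum>k\<le>n. c k * conv_pow c m (n - k))"

text \<open>Law of B = total number of mutant cells at time T: the number of mutants is
  Poisson(mut_mass), and given it, the clone sizes are i.i.d. with law clone_pmf
  (Poisson point process with independent marks).\<close>
definition B_pmf :: "real \<Rightarrow> real \<Rightarrow> real \<Rightarrow> real \<Rightarrow> real \<Rightarrow> nat \<Rightarrow> real" where
  "B_pmf de nu al be T n =
     (\<Sum>m. exp (- mut_mass de nu T) * mut_mass de nu T ^ m / fact m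
            * conv_pow (clone_pmf de nu al be T) m n)"

end

theory Submission
  imports Defs "HOL-Computational_Algebra.Formal_Power_Series"
begin

definition cF :: "real \<Rightarrow> nat \<Rightarrow> nat \<Rightarrow> real" where
  "cF g j n = pochhammer g n / pochhammer (1 + g + real j) n"

lemma poch_le:
  fixes a b :: real
  assumes "0 < a" "a \<le> b"
  shows "pochhammer a n \<le> pochhammer b n"
proof (induction n)
  case (Suc n)
  show ?case unfolding pochhammer_Suc
    by (rule mult_mono) (use Suc assms pochhammer_pos[of b n] pochhammer_pos[of a n] in auto)
qed simp

lemma cF_bounds: assumes "g > 0" shows "0 \<le> cF g j n" "cF g j n \<le> 1"
proof -
  have p1: "pochhammer g n > 0" "pochhammer (1 + g + real j) n > 0"
    using assms by (auto intro!: pochhammer_pos)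
  then show "0 \<le> cF g j n" unfolding cF_def by simp
  have "pochhammer g n \<le> pochhammer (1 + g + real j) n"
    using assms by (intro poch_le) auto
  then show "cF g j n \<le> 1" using p1 unfolding cF_def by simp
qed

lemma hyp_cF: "hyp2F1 1 g (1 + g + real j) y = (\<Sum>n. cF g j n * y ^ n)"
  unfolding hyp2F1_def cF_def by (simp add: pochhammer_fact[symmetric])

lemma cF_summable:
  assumes "g > 0" "\<bar>y\<bar> < 1"
  shows "summable (\<lambda>n. cF g j n * y ^ n)"
proof (rule summable_comparison_test[of _ "\<lambda>n. \<bar>y\<bar> ^ n"])
  show "\<exists>N. \<forall>n\<ge>N. norm (cF g j n * y ^ n) \<le> \<bar>y\<bar> ^ n"
    using cF_bounds[OF assms(1)]
    by (auto simp: abs_mult power_abs intro!: mult_left_le_one_le)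
  show "summable (\<lambda>n. \<bar>y\<bar> ^ n)" using assms by (simp add: summable_geometric)
qed

lemma cF_rec: assumes "g > 0"
  shows "(real (Suc n) + g + real j) * cF g j (Suc n) = (real n + g) * cF g j n"
proof -
  have p1: "pochhammer (1 + g + real j) n > 0"
    using assms by (auto intro!: pochhammer_pos)
  have p2: "1 + g + real j + real n > 0" using assms by simp
  have e: "cF g j (Suc n) = cF g j n * ((g + real n) / (1 + g + real j + real n))"
    unfolding cF_def pochhammer_Suc by (simp add: add.assoc)
  show ?thesis unfolding e using p2 by (simp add: field_simps)
qed

lemma cF_0: "cF g j 0 = 1" by (simp add: cF_def)

lemma hyp_ode:
  fixes j :: nat
  assumes g: "g > 0" and y: "\<bar>y\<bar> < 1"
  defines "F \<equiv> hyp2F1 1 g (1 + g + real j)"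
  shows "\<exists>D. (F has_real_derivative D) (at y) \<and>
              y * (1 - y) * D + (g + real j - g * y) * F y = g + real j"
proof -
  define K where "K = (1 + \<bar>y\<bar>) / 2"
  have K: "\<bar>y\<bar> < \<bar>K\<bar>" "\<bar>K\<bar> < 1" using y by (auto simp: K_def)
  have FF: "F = (\<lambda>y. \<Sum>n. cF g j n * y ^ n)" unfolding F_def by (rule ext, rule hyp_cF)
  define D where "D = (\<Sum>n. diffs (cF g j) n * y ^ n)"
  have dF: "(F has_real_derivative D) (at y)" unfolding FF D_def
    by (rule termdiffs_strong[OF cF_summable[OF g K(2)]]) (use K in simp)
  have sA: "(\<lambda>n. cF g j n * y ^ n) sums F y"
    unfolding FF using cF_summable[OF g y] by (simp add: summable_sums)
  have sD: "(\<lambda>n. diffs (cF g j) n * y ^ n) sums D"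
    unfolding D_def
    by (rule summable_sums, rule termdiff_converges[of _ "\<bar>K\<bar>"])
       (use K cF_summable[OF g] in \<open>auto simp: abs_mult\<close>)
  define b where "b n = (real n + g + real j) * cF g j n * y ^ n" for n
  have s1: "(\<lambda>n. y * (diffs (cF g j) n * y ^ n)) sums (y * D)"
    using sums_mult[OF sD] .
  have s1': "(\<lambda>n. real n * cF g j n * y ^ n) sums (y * D)"
  proof -
    have "(\<lambda>n. real (Suc n) * cF g j (Suc n) * y ^ Suc n) sums (y * D)"
      using s1 by (simp add: diffs_def algebra_simps)
    then show ?thesis using sums_Suc_iff[of "\<lambda>n. real n * cF g j n * y ^ n" "y * D"] by simp
  qed
  have s2: "(\<lambda>n. real n * cF g j n * y ^ Suc n) sums (y * (y * D))"
    using sums_mult[OF s1', of y] by (simp add: algebra_simps)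
  have s3: "(\<lambda>n. g * cF g j n * y ^ Suc n) sums (g * y * F y)"
    using sums_mult[OF sA, of "g * y"] by (simp add: algebra_simps)
  have s4: "(\<lambda>n. (g + real j) * cF g j n * y ^ n) sums ((g + real j) * F y)"
    using sums_mult[OF sA, of "g + real j"] by (simp add: algebra_simps)
  have sb: "b sums (y * D + (g + real j) * F y)"
    using sums_add[OF s1' s4] unfolding b_def by (simp add: algebra_simps)
  have sb1: "(\<lambda>n. b (Suc n)) sums (y * (y * D) + g * y * F y)"
  proof -
    have "b (Suc n) = real n * cF g j n * y ^ Suc n + g * cF g j n * y ^ Suc n" for n
      unfolding b_def using cF_rec[OF g, of n j]
      by (simp add: algebra_simps)
    then show ?thesis using sums_add[OF s2 s3] by simp
  qed
  have "b sums (y * (y * D) + g * y * F y + b 0)"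
    using sb1 by (subst sums_Suc_iff[symmetric]) simp
  then have "y * D + (g + real j) * F y = y * (y * D) + g * y * F y + b 0"
    using sb sums_unique2 by blast
  moreover have "b 0 = g + real j" by (simp add: b_def cF_0)
  ultimately show ?thesis using dF by (intro exI[of _ D]) (auto simp: algebra_simps)
qed

lemma pow_aux: fixes Q :: real assumes "Q \<noteq> 0"
  shows "real j * Q ^ (j - Suc 0) / (Q ^ j * Q ^ j) = real j / Q ^ Suc j"
  using assms by (cases j) (simp_all add: field_simps)

lemma pow_aux2: fixes Q :: real assumes "Q \<noteq> 0"
  shows "- (inverse (Q ^ j) * (real j * (l * e * Q ^ (j - Suc 0))) * inverse (Q ^ j))
     = - (real j * l * e) / Q ^ Suc j"
  using assms by (cases j) (simp_all add: field_simps)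

lemma alg1:
  fixes eg E P F D y g lam A :: real and j :: nat
  assumes E: "E > 0" and P: "P > 0" and A: "A > 0" and g: "g > 0"
    and yD: "y * D = ((g + real j) - (g + real j - g * y) * F) * E / P"
    and Ey: "E * y = E - P"
  shows "((- (g * lam) * eg * inverse A + - (real j * lam * E) / (P * A) * eg) * F
          + D * (- lam * y) * (eg * inverse A)) / (real j + g)
       = - lam * E * eg / (P * A)"
proof -
  have jg: "real j + g > 0" using g by simp
  have e: "D * (- lam * y) = - lam * (y * D)" by simp
  have "((- (g * lam) * eg * inverse A + - (real j * lam * E) / (P * A) * eg) * F
          + D * (- lam * y) * (eg * inverse A)) * (P * A) 
       = eg * lam * (- g * P * F - real j * E * F - ((g + real j) - (g + real j) * F) * E - g * F * (E * y))"
    unfolding e yD using P A E by (simp add: field_simps)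
  also have "\<dots> = eg * lam * (- (g + real j) * E)"
    unfolding Ey by (simp add: algebra_simps)
  finally have L: "((- (g * lam) * eg * inverse A + - (real j * lam * E) / (P * A) * eg) * F
          + D * (- lam * y) * (eg * inverse A)) = eg * lam * (- (g + real j) * E) / (P * A)"
    using P A by (simp add: eq_divide_eq)
  also have "\<dots> = (real j + g) * (- lam * E * eg / (P * A))" using P A by (simp add: field_simps)
  finally show ?thesis using jg by simp
qed

lemma hj_deriv:
  fixes j :: nat and lam g q t :: real
  assumes lam: "lam > 0" and g: "g > 0" and q: "0 \<le> q" "q < 1" and t: "t \<ge> 0"
  defines "h \<equiv> (\<lambda>t. exp (-(g*lam)*t) / (exp (lam*t) - q) ^ j
                 * hyp2F1 1 g (1 + g + real j) (q * exp (-(lam*t))) / (real j + g))"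
  shows "(h has_real_derivative
            (- lam * exp (lam*t) * exp (-(g*lam)*t) / (exp (lam*t) - q) ^ Suc j)) (at t)"
proof -
  define F where "F = hyp2F1 1 g (1 + g + real j)"
  define y where "y = q * exp (-(lam*t))"
  have e1: "exp (-(lam*t)) \<le> 1" using lam t by simp
  have e0: "exp (-(lam*t)) > 0" by simp
  have y0: "0 \<le> y" using q by (simp add: y_def)
  have "y \<le> q" unfolding y_def using mult_left_mono[OF e1 q(1)] by simp
  then have y1: "y < 1" using q by simp
  then have ya: "\<bar>y\<bar> < 1" using y0 by simp
  obtain D where dF: "(F has_real_derivative D) (at y)"
    and ode: "y * (1 - y) * D + (g + real j - g * y) * F y = g + real j"
    using hyp_ode[OF g ya, of j] unfolding F_def by blast
  have dy: "((\<lambda>t. q * exp (-(lam*t))) has_real_derivative (- lam * y)) (at t)"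
    unfolding y_def by (auto intro!: derivative_eq_intros)
  have dFy: "((\<lambda>t. F (q * exp (-(lam*t)))) has_real_derivative (D * (- lam * y))) (at t)"
    using DERIV_chain2[OF dF[unfolded y_def] dy[unfolded y_def]] unfolding y_def .
  have E1: "exp (lam * t) \<ge> 1" using lam t by simp
  have P: "exp (lam*t) - q > 0" using E1 q by linarith
  have Ey: "exp (lam*t) * y = q" unfolding y_def by (simp add: exp_minus field_simps)
  have h_eq: "h = (\<lambda>t. exp (-(g*lam)*t) * inverse ((exp (lam*t) - q) ^ j)
                 * F (q * exp (-(lam*t))) / (real j + g))"
    unfolding h_def F_def by (simp add: divide_inverse)
  have dP: "((\<lambda>t. inverse ((exp (lam*t) - q) ^ j)) has_real_derivative
      (- (real j * lam * exp (lam*t)) / (exp (lam*t) - q) ^ Suc j)) (at t)"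
  proof -
    have dP0: "((\<lambda>t. exp (lam*t) - q) has_real_derivative lam * exp (lam*t)) (at t)"
      by (auto intro!: derivative_eq_intros)
    show ?thesis
      apply (rule DERIV_cong[OF DERIV_inverse'[OF DERIV_power[OF dP0]]])
      using P apply simp
      by (rule pow_aux2) (use P in simp)
  qed
  have dex: "((\<lambda>t. exp (-(g*lam)*t)) has_real_derivative (-(g*lam)) * exp (-(g*lam)*t)) (at t)"
    by (auto intro!: derivative_eq_intros)
  have yD: "y * D = ((g + real j) - (g + real j - g * y) * F y) * exp (lam*t) / (exp (lam*t) - q)"
  proof -
    have b: "1 - y = (exp (lam*t) - q) / exp (lam*t)" using Ey by (simp add: field_simps)
    have a: "y * D = ((g + real j) - (g + real j - g * y) * F y) / (1 - y)"
      using ode y1 by (simp add: field_simps)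
    show ?thesis unfolding a b by simp
  qed
  have Ey2: "exp (lam*t) * y = exp (lam*t) - (exp (lam*t) - q)" using Ey by simp
  show ?thesis unfolding h_eq
    apply (rule DERIV_cong[OF DERIV_cdivide[OF DERIV_mult[OF DERIV_mult[OF dex dP] dFy]]])
    unfolding y_def[symmetric] power_Suc
    by (rule alg1[OF _ P _ g yD Ey2]) (use P in auto)
qed
lemma binsum:
  fixes P q lam E eg :: real and m :: nat
  assumes P: "P \<noteq> 0"
  shows "(\<Sum>j=1..Suc m. real (m choose (j - 1)) * (-(1-q)) ^ j * (- lam * E * eg / P ^ Suc j))
       = lam * (1-q) * E * eg * (P - (1-q)) ^ m / P ^ (m + 2)"
proof -
  define c where "c = lam * (1-q) * E * eg / P ^ 2"
  have "(\<Sum>j=1..Suc m. real (m choose (j - 1)) * (-(1-q)) ^ j * (- lam * E * eg / P ^ Suc j))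
      = (\<Sum>i=0..m. real (m choose i) * (-(1-q)) ^ Suc i * (- lam * E * eg / P ^ Suc (Suc i)))"
    using sum.shift_bounds_cl_Suc_ivl[of "\<lambda>j. real (m choose (j - 1)) * (-(1-q)) ^ j * (- lam * E * eg / P ^ Suc j)" 0 m]
    by simp
  also have "\<dots> = (\<Sum>i\<le>m. c * (real (m choose i) * (-(1-q)/P) ^ i * 1 ^ (m - i)))"
    unfolding atLeast0AtMost
    by (rule sum.cong) (use P in \<open>auto simp: c_def power_divide field_simps power2_eq_square\<close>)
  also have "\<dots> = c * (-(1-q)/P + 1) ^ m"
    by (simp add: binomial_ring sum_distrib_left)
  also have "\<dots> = lam * (1-q) * E * eg * (P - (1-q)) ^ m / P ^ (m + 2)"
    unfolding c_def using P by (simp add: power_divide field_simps power_add power2_eq_square)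
  finally show ?thesis .
qed

definition hfun :: "real \<Rightarrow> real \<Rightarrow> real \<Rightarrow> nat \<Rightarrow> real \<Rightarrow> real" where
  "hfun lam g q j t = exp (-(g*lam)*t) / (exp (lam*t) - q) ^ j
                 * hyp2F1 1 g (1 + g + real j) (q * exp (-(lam*t))) / (real j + g)"

lemma hfun_deriv:
  assumes "lam > 0" "g > 0" "0 \<le> q" "q < 1" "t \<ge> 0"
  shows "(hfun lam g q j has_real_derivative
            (- lam * exp (lam*t) * exp (-(g*lam)*t) / (exp (lam*t) - q) ^ Suc j)) (at t)"
proof -
  have "hfun lam g q j = (\<lambda>t. exp (-(g*lam)*t) / (exp (lam*t) - q) ^ j
                 * hyp2F1 1 g (1 + g + real j) (q * exp (-(lam*t))) / (real j + g))"
    by (rule ext) (simp add: hfun_def)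
  then show ?thesis using hj_deriv[OF assms] by simp
qed

lemma Hk_deriv:
  assumes lam: "lam > 0" and g: "g > 0" and q: "0 \<le> q" "q < 1" and t: "t \<ge> 0"
  shows "((\<lambda>t. \<Sum>j=1..Suc m. real (m choose (j - 1)) * (-(1-q)) ^ j * hfun lam g q j t)
     has_real_derivative
       lam * (1-q) * exp (lam*t) * exp (-(g*lam)*t) * (exp (lam*t) - 1) ^ m / (exp (lam*t) - q) ^ (m + 2)) (at t)"
proof -
  have E1: "exp (lam * t) \<ge> 1" using lam t by simp
  have P: "exp (lam*t) - q \<noteq> 0" using E1 q by linarith
  show ?thesis
    apply (rule DERIV_cong[OF DERIV_sum])
     apply (rule DERIV_cmult, rule hfun_deriv[OF lam g q t])
    using binsum[OF P, of m q lam "exp (lam*t)" "exp (-(g*lam)*t)"] by simp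
qed

lemma pascal_sum:
  fixes a :: "nat \<Rightarrow> real"
  shows "(\<Sum>i\<le>Suc m. real (Suc m choose i) * a i)
       = (\<Sum>i\<le>m. real (m choose i) * a i) + (\<Sum>i\<le>m. real (m choose i) * a (Suc i))"
proof -
  have "(\<Sum>i\<le>Suc m. real (Suc m choose i) * a i)
      = a 0 + (\<Sum>i\<le>m. real (Suc m choose Suc i) * a (Suc i))"
    by (subst sum.atMost_Suc_shift) simp
  also have "\<dots> = a 0 + (\<Sum>i\<le>m. real (m choose Suc i) * a (Suc i)) + (\<Sum>i\<le>m. real (m choose i) * a (Suc i))"
    by (simp add: sum.distrib algebra_simps)
  also have "a 0 + (\<Sum>i\<le>m. real (m choose Suc i) * a (Suc i)) = (\<Sum>i\<le>Suc m. real (m choose i) * a i)"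
    by (subst sum.atMost_Suc_shift) simp
  also have "\<dots> = (\<Sum>i\<le>m. real (m choose i) * a i)"
    by simp
  finally show ?thesis .
qed

lemma findiff:
  fixes x :: real
  assumes "x > 0"
  shows "(\<Sum>i\<le>m. real (m choose i) * ((-1) ^ i / pochhammer (x + real i) (Suc n)))
       = fact (m + n) / fact n / pochhammer x (Suc (m + n))"
  using assms
proof (induction m arbitrary: x)
  case 0
  then show ?case by simp
next
  case (Suc m)
  have x1: "x + 1 > 0" using Suc.prems by simp
  define K where "K = Suc (m + n)"
  have p1: "pochhammer x K > 0" "pochhammer (x+1) K > 0"
    using Suc.prems x1 by (auto intro!: pochhammer_pos)
  have r1: "pochhammer x (Suc K) = x * pochhammer (x+1) K" by (simp add: pochhammer_rec)
  have r2: "pochhammer x (Suc K) = pochhammer x K * (x + real K)" by (simp add: pochhammer_Suc)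
  have "(\<Sum>i\<le>Suc m. real (Suc m choose i) * ((-1) ^ i / pochhammer (x + real i) (Suc n)))
      = (\<Sum>i\<le>m. real (m choose i) * ((-1) ^ i / pochhammer (x + real i) (Suc n)))
        - (\<Sum>i\<le>m. real (m choose i) * ((-1) ^ i / pochhammer (x + 1 + real i) (Suc n)))"
    by (subst pascal_sum) (simp add: sum_negf[symmetric] add_ac)
  also have "\<dots> = fact (m + n) / fact n * (1 / pochhammer x K - 1 / pochhammer (x+1) K)"
    using Suc.IH[of x] Suc.IH[of "x+1"] Suc.prems x1 by (simp add: K_def right_diff_distrib)
  also have "1 / pochhammer x K - 1 / pochhammer (x+1) K = real K / pochhammer x (Suc K)"
  proof -
    have "pochhammer x (Suc K) > 0" using Suc.prems by (auto intro!: pochhammer_pos)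
    then have "1 / pochhammer x K = (x + real K) / pochhammer x (Suc K)"
      "1 / pochhammer (x+1) K = x / pochhammer x (Suc K)"
      using p1 r1 r2 by (auto simp: field_simps)
    then show ?thesis by (simp add: diff_divide_distrib[symmetric])
  qed
  finally show ?case by (simp add: K_def)
qed

lemma fact_poch: "fact (m + n) = (fact m :: real) * pochhammer (real (Suc m)) n"
  using pochhammer_product'[of "1::real" m n] by (simp add: pochhammer_fact add_ac)

lemma coef_id:
  fixes g :: real and m n :: nat
  assumes g: "g > 0"
  shows "- (\<Sum>j=1..Suc m. real (m choose (j - 1)) * (-1) ^ j * (cF g j n / (real j + g)))
       = fact m / pochhammer (g + 1) (Suc m) *
         (pochhammer (real (Suc m)) n * pochhammer g n / pochhammer (1 + g + real (Suc m)) n / fact n)"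
proof -
  have "- (\<Sum>j=1..Suc m. real (m choose (j - 1)) * (-1) ^ j * (cF g j n / (real j + g)))
      = (\<Sum>i\<le>m. pochhammer g n * (real (m choose i) * ((-1) ^ i / pochhammer (g + 1 + real i) (Suc n))))"
  proof -
    have "- (\<Sum>j=1..Suc m. real (m choose (j - 1)) * (-1) ^ j * (cF g j n / (real j + g)))
        = (\<Sum>i=0..m. - (real (m choose i) * (-1) ^ Suc i * (cF g (Suc i) n / (real (Suc i) + g))))"
      using sum.shift_bounds_cl_Suc_ivl[of "\<lambda>j. real (m choose (j - 1)) * (-1) ^ j * (cF g j n / (real j + g))" 0 m]
      by (simp add: sum_negf)
    also have "\<dots> = (\<Sum>i\<le>m. pochhammer g n * (real (m choose i) * ((-1) ^ i / pochhammer (g + 1 + real i) (Suc n))))"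
      unfolding atLeast0AtMost
    proof (rule sum.cong[OF refl])
      fix i assume "i \<in> {..m}"
      have pr: "pochhammer (g + 1 + real i) (Suc n) = (g + 1 + real i) * pochhammer (1 + g + real (Suc i)) n"
        by (simp add: pochhammer_rec add_ac)
      have pp: "pochhammer (1 + g + real (Suc i)) n > 0" using g by (intro pochhammer_pos) auto
      show "- (real (m choose i) * (-1) ^ Suc i * (cF g (Suc i) n / (real (Suc i) + g)))
          = pochhammer g n * (real (m choose i) * ((-1) ^ i / pochhammer (g + 1 + real i) (Suc n)))"
        unfolding pr cF_def using g pp by (simp add: field_simps)
    qed
    finally show ?thesis .
  qed
  also have "\<dots> = pochhammer g n * (fact (m + n) / fact n / pochhammer (g + 1) (Suc (m + n)))"
    unfolding sum_distrib_left[symmetric] using findiff[of "g + 1" m n] g by simp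
  also have "\<dots> = fact m / pochhammer (g + 1) (Suc m) *
         (pochhammer (real (Suc m)) n * pochhammer g n / pochhammer (1 + g + real (Suc m)) n / fact n)"
  proof -
    have pp: "pochhammer (g + 1) (Suc (m + n)) = pochhammer (g + 1) (Suc m) * pochhammer (1 + g + real (Suc m)) n"
      using pochhammer_product'[of "g+1" "Suc m" n] by (simp add: add_ac)
    have p1: "pochhammer (g + 1) (Suc m) > 0" "pochhammer (1 + g + real (Suc m)) n > 0"
      using g by (auto intro!: pochhammer_pos)
    show ?thesis unfolding pp fact_poch using p1 by (simp add: field_simps)
  qed
  finally show ?thesis .
qed

lemma Hk0:
  fixes g q lam :: real and m :: nat
  assumes g: "g > 0" and q: "0 \<le> q" "q < 1"
  shows "- (\<Sum>j=1..Suc m. real (m choose (j - 1)) * (-(1-q)) ^ j * hfun lam g q j 0)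
       = fact m / pochhammer (g + 1) (Suc m) * hyp2F1 (real (Suc m)) g (1 + g + real (Suc m)) q"
proof -
  define C where "C = fact m / pochhammer (g + 1) (Suc m)"
  have "pochhammer (g + 1) (Suc m) > 0" using g by (intro pochhammer_pos) simp
  then have C0: "C > 0" unfolding C_def by simp
  have qa: "\<bar>q\<bar> < 1" using q by simp
  have L: "- (\<Sum>j=1..Suc m. real (m choose (j - 1)) * (-(1-q)) ^ j * hfun lam g q j 0)
      = - (\<Sum>j=1..Suc m. real (m choose (j - 1)) * (-1) ^ j * (hyp2F1 1 g (1 + g + real j) q / (real j + g)))"
  proof -
    have "(-(1-q)) ^ j * hfun lam g q j 0 = (-1) ^ j * (hyp2F1 1 g (1 + g + real j) q / (real j + g))" for j
    proof -
      have "(-(1-q)) ^ j = (-1) ^ j * (1-q) ^ j" by (simp add: power_mult_distrib[symmetric])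
      then show ?thesis unfolding hfun_def using q by simp
    qed
    then show ?thesis by (simp add: mult.assoc)
  qed
  have s: "(\<lambda>n. - (\<Sum>j=1..Suc m. real (m choose (j - 1)) * (-1) ^ j * (cF g j n / (real j + g))) * q ^ n)
      sums (- (\<Sum>j=1..Suc m. real (m choose (j - 1)) * (-1) ^ j * (hyp2F1 1 g (1 + g + real j) q / (real j + g))))"
  proof -
    have "(\<lambda>n. \<Sum>j=1..Suc m. real (m choose (j - 1)) * (-1) ^ j * (cF g j n * q ^ n / (real j + g)))
      sums (\<Sum>j=1..Suc m. real (m choose (j - 1)) * (-1) ^ j * (hyp2F1 1 g (1 + g + real j) q / (real j + g)))"
    proof (rule sums_sum)
      fix j
      have "(\<lambda>n. cF g j n * q ^ n) sums hyp2F1 1 g (1 + g + real j) q"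
        unfolding hyp_cF using cF_summable[OF g qa] by (simp add: summable_sums)
      then show "(\<lambda>n. real (m choose (j - 1)) * (-1) ^ j * (cF g j n * q ^ n / (real j + g)))
          sums (real (m choose (j - 1)) * (-1) ^ j * (hyp2F1 1 g (1 + g + real j) q / (real j + g)))"
        by (intro sums_mult sums_divide)
    qed
    note ss = this
    have dd: "(\<Sum>j=1..Suc m. real (m choose (j - 1)) * (-1) ^ j * (cF g j n / (real j + g))) * q ^ n
       = (\<Sum>j=1..Suc m. real (m choose (j - 1)) * (-1) ^ j * (cF g j n * q ^ n / (real j + g)))" for n
      unfolding sum_distrib_right by (rule sum.cong) simp_all
    have eq: "(\<lambda>n. - (\<Sum>j=1..Suc m. real (m choose (j - 1)) * (-1) ^ j * (cF g j n / (real j + g))) * q ^ n)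
       = (\<lambda>n. - (\<Sum>j=1..Suc m. real (m choose (j - 1)) * (-1) ^ j * (cF g j n * q ^ n / (real j + g))))"
      by (rule ext, subst minus_mult_left[symmetric], subst dd, rule refl)
    show ?thesis unfolding eq by (rule sums_minus[OF ss])
  qed
  have s2: "(\<lambda>n. C * (pochhammer (real (Suc m)) n * pochhammer g n / pochhammer (1 + g + real (Suc m)) n * q ^ n / fact n))
      sums (- (\<Sum>j=1..Suc m. real (m choose (j - 1)) * (-1) ^ j * (hyp2F1 1 g (1 + g + real j) q / (real j + g))))"
    using s unfolding coef_id[OF g] C_def by (simp add: field_simps)
  have s3: "(\<lambda>n. pochhammer (real (Suc m)) n * pochhammer g n / pochhammer (1 + g + real (Suc m)) n * q ^ n / fact n)
      sums ((- (\<Sum>j=1..Suc m. real (m choose (j - 1)) * (-1) ^ j * (hyp2F1 1 g (1 + g + real j) q / (real j + g)))) / C)"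
    using sums_divide[OF s2, of C] C0 by simp
  have "hyp2F1 (real (Suc m)) g (1 + g + real (Suc m)) q
      = (- (\<Sum>j=1..Suc m. real (m choose (j - 1)) * (-1) ^ j * (hyp2F1 1 g (1 + g + real j) q / (real j + g)))) / C"
    using sums_unique[OF s3, symmetric] by (simp only: hyp2F1_def[of "real (Suc m)"])
  then show ?thesis unfolding L C_def[symmetric] using C0 by simp
qed

lemma bd_q:
  fixes al be t :: real
  assumes ab: "al > be" "be \<ge> 0" and t: "t \<ge> 0"
  defines "q \<equiv> be / al" and "E \<equiv> exp ((al - be) * t)"
  shows "bd_xi al be t = q * (E - 1) / (E - q)"
    and "bd_eta al be t = (E - 1) / (E - q)"
    and "E \<ge> 1" and "0 \<le> q" and "q < 1" and "E - q > 0"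
proof -
  have al: "al > 0" using ab by simp
  show E1: "E \<ge> 1" unfolding E_def using ab t by simp
  show q0: "0 \<le> q" unfolding q_def using ab al by simp
  show q1: "q < 1" unfolding q_def using ab al by simp
  show Eq: "E - q > 0" using E1 q1 by simp
  have d: "al * E - be = al * (E - q)" unfolding q_def using al by (simp add: field_simps)
  show "bd_xi al be t = q * (E - 1) / (E - q)"
    unfolding bd_xi_def E_def[symmetric] d unfolding q_def using al by simp
  show "bd_eta al be t = (E - 1) / (E - q)"
    unfolding bd_eta_def E_def[symmetric] d using al by simp
qed

lemma bd_pmf_Suc:
  fixes al be t :: real
  assumes ab: "al > be" "be \<ge> 0" and t: "t \<ge> 0"
  defines "q \<equiv> be / al" and "E \<equiv> exp ((al - be) * t)"
  shows "bd_pmf al be t (Suc m) = (1 - q) ^ 2 * E * (E - 1) ^ m / (E - q) ^ (m + 2)"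
proof -
  note f = bd_q[OF ab t, folded q_def E_def]
  have x: "1 - bd_xi al be t = (1 - q) * E / (E - q)" using f(1,6) by (simp add: field_simps)
  have y: "1 - bd_eta al be t = (1 - q) / (E - q)" using f(2,6) by (simp add: field_simps)
  have "bd_pmf al be t (Suc m) = (1 - bd_xi al be t) * (1 - bd_eta al be t) * bd_eta al be t ^ m"
    by (simp add: bd_pmf_def)
  also have "\<dots> = (1 - q) * E / (E - q) * ((1 - q) / (E - q)) * ((E - 1) / (E - q)) ^ m"
    by (subst x, subst y, subst f(2), rule refl)
  also have "\<dots> = (1 - q) ^ 2 * E * (E - 1) ^ m / (E - q) ^ (m + 2)"
    using f(6) by (simp add: power_divide power2_eq_square power_add mult_ac)
  finally show ?thesis .
qed

lemma bd_xi_m1: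
  fixes al be t :: real
  assumes ab: "al > be" "be \<ge> 0" and t: "t \<ge> 0"
  defines "q \<equiv> be / al" and "E \<equiv> exp ((al - be) * t)"
  shows "bd_xi al be t - 1 = - ((1 - q) * E / (E - q))"
proof -
  note f = bd_q[OF ab t, folded q_def E_def]
  show ?thesis using f(1,6) by (simp add: field_simps)
qed

lemma bd_pmf_bounds:
  fixes al be t :: real
  assumes ab: "al > be" "be \<ge> 0" and t: "t \<ge> 0"
  shows "0 \<le> bd_pmf al be t n" "bd_pmf al be t n \<le> 1"
proof -
  define q where "q = be / al"
  define E where "E = exp ((al - be) * t)"
  note f = bd_q[OF ab t, folded q_def E_def]
  have qE: "1 * q \<le> E * q" using mult_right_mono[OF f(3) f(4)] .
  have "0 \<le> bd_pmf al be t n \<and> bd_pmf al be t n \<le> 1"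
  proof (cases n)
    case 0
    have "1 * q \<le> E * q" using mult_right_mono[OF f(3) f(4)] .
    then have "q * (E - 1) \<le> E - q" using f(3,4,5) by (simp add: algebra_simps)
    then show ?thesis unfolding 0 bd_pmf_def using f by (simp add: divide_le_eq_1)
  next
    case (Suc m)
    have e: "bd_pmf al be t n = ((1 - q) * E / (E - q)) * ((1 - q) / (E - q)) * ((E - 1) / (E - q)) ^ m"
      unfolding Suc bd_pmf_Suc[OF ab t, folded q_def E_def] using f(6)
      by (simp add: power_divide power2_eq_square field_simps)
    have a: "0 \<le> (1 - q) * E / (E - q)" "(1 - q) * E / (E - q) \<le> 1"
      using f qE by (auto simp: divide_le_eq_1 algebra_simps)
    have b: "0 \<le> (1 - q) / (E - q)" "(1 - q) / (E - q) \<le> 1"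
      using f by (auto simp: divide_le_eq_1)
    have c: "0 \<le> ((E - 1) / (E - q)) ^ m" "((E - 1) / (E - q)) ^ m \<le> 1"
      using f by (auto simp: divide_le_eq_1 intro!: power_le_one)
    show ?thesis unfolding e
      by (intro conjI mult_nonneg_nonneg mult_le_one) (rule a b c)+
  qed
  then show "0 \<le> bd_pmf al be t n" "bd_pmf al be t n \<le> 1" by auto
qed

lemma ftc_rev:
  fixes H H' :: "real \<Rightarrow> real"
  assumes T: "T \<ge> 0" and d: "\<And>t. 0 \<le> t \<Longrightarrow> t \<le> T \<Longrightarrow> (H has_real_derivative H' t) (at t)"
  shows "((\<lambda>s. C * H' (T - s)) has_integral (C * H T - C * H 0)) {0..T}"
proof -
  have "((\<lambda>s. C * H' (T - s)) has_integral ((- C * H (T - T)) - (- C * H (T - 0)))) {0..T}"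
  proof (rule fundamental_theorem_of_calculus[OF T])
    fix s assume s: "s \<in> {0..T}"
    have dT: "((\<lambda>s. T - s) has_real_derivative -1) (at s)"
      by (auto intro!: derivative_eq_intros)
    have "((\<lambda>s. H (T - s)) has_real_derivative H' (T - s) * -1) (at s)"
      using DERIV_chain2[OF d dT] s by auto
    then have "((\<lambda>s. - C * H (T - s)) has_real_derivative - C * (H' (T - s) * -1)) (at s)"
      by (rule DERIV_cmult)
    then have "((\<lambda>s. - C * H (T - s)) has_real_derivative C * H' (T - s)) (at s within {0..T})"
      by (simp add: has_field_derivative_at_within)
    then show "((\<lambda>s. - C * H (T - s)) has_vector_derivative C * H' (T - s)) (at s within {0..T})"
      by (simp add: has_real_derivative_iff_has_vector_derivative)
  qed
  then show ?thesis by simp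
qed

lemma endpoints:
  fixes \<delta> lam N :: real
  assumes "\<delta> > 0" "lam > 0" "N > 1"
  defines "\<gamma> \<equiv> \<delta> / lam" and "\<tau> \<equiv> ln N / \<delta>"
  shows "exp (-(\<gamma> * lam) * \<tau>) = 1 / N" and "exp (lam * \<tau>) = N powr (1/\<gamma>)"
    and "exp (-(lam * \<tau>)) = N powr (-1/\<gamma>)" and "\<gamma> * lam = \<delta>" and "\<tau> > 0"
proof -
  show gl: "\<gamma> * lam = \<delta>" unfolding \<gamma>_def using assms by simp
  have lnN: "ln N > 0" using assms by simp
  show "\<tau> > 0" unfolding \<tau>_def using lnN assms by simp
  have "-(\<gamma> * lam) * \<tau> = - ln N" unfolding gl \<tau>_def using assms by simp
  then show "exp (-(\<gamma> * lam) * \<tau>) = 1 / N" using assms by (simp add: exp_minus inverse_eq_divide)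
  have lt: "lam * \<tau> = 1/\<gamma> * ln N" unfolding \<gamma>_def \<tau>_def using assms by simp
  show "exp (lam * \<tau>) = N powr (1/\<gamma>)" unfolding lt powr_def using assms by simp
  show "exp (-(lam * \<tau>)) = N powr (-1/\<gamma>)" unfolding lt powr_def using assms by simp
qed

lemma aux3: fixes N mu c a P F G :: real
  assumes "N \<noteq> 0"
  shows "N * mu * (c * a * ((1/N) / P * F / G)) = mu * (c * (1 / G) * (a / P) * F)"
proof -
  have "N * mu * (c * a * ((1/N) / P * F / G)) = (N * (1/N)) * (mu * (c * (1 / G) * (a / P) * F))"
    by (simp add: divide_inverse mult_ac)
  also have "N * (1/N) = 1" using assms by simp
  finally show ?thesis by simp
qed

lemma int_Suc:
  fixes \<delta> \<nu> \<alpha> \<beta> N :: real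
  assumes "\<delta> > 0" and "\<nu> > 0" and "\<alpha> > \<beta>" and "\<beta> \<ge> 0" and "N > 1"
  defines "lam \<equiv> \<alpha> - \<beta>"
  defines "q \<equiv> \<beta> / \<alpha>"
  defines "\<gamma> \<equiv> \<delta> / lam"
  defines "\<mu> \<equiv> \<nu> / \<alpha>"
  defines "\<tau> \<equiv> ln N / \<delta>"
  shows "((\<lambda>s. \<nu> * exp (\<delta> * s) * bd_pmf \<alpha> \<beta> (\<tau> - s) (Suc m)) has_integral
     (\<mu> * (\<Sum>j=1..Suc m. real (m choose (j - 1)) * (1 / (real j + \<gamma>))
               * ((1 - q) / (q - N powr (1/\<gamma>))) ^ j
               * hyp2F1 1 \<gamma> (1 + \<gamma> + real j) (N powr (-1/\<gamma>) * q))
       + N * \<mu> * (fact m / pochhammer (\<gamma> + 1) (Suc m))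
           * hyp2F1 (real (Suc m)) \<gamma> (1 + \<gamma> + real (Suc m)) q)) {0..\<tau>}"
proof -
  have lam: "lam > 0" unfolding lam_def using assms by simp
  have al: "\<alpha> > 0" using assms by simp
  have g: "\<gamma> > 0" unfolding \<gamma>_def using lam assms by simp
  have q0: "0 \<le> q" and q1: "q < 1" unfolding q_def using assms al by auto
  note ep = endpoints[OF assms(1) lam assms(5), folded \<gamma>_def \<tau>_def]
  define H where "H t = (\<Sum>j=1..Suc m. real (m choose (j - 1)) * (-(1-q)) ^ j * hfun lam \<gamma> q j t)" for t
  define H' where "H' t = lam * (1-q) * exp (lam*t) * exp (-(\<gamma>*lam)*t) * (exp (lam*t) - 1) ^ m / (exp (lam*t) - q) ^ (m + 2)" for t
  have dH: "(H has_real_derivative H' t) (at t)" if "0 \<le> t" "t \<le> \<tau>" for t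
    unfolding H_def H'_def by (rule Hk_deriv[OF lam g q0 q1 that(1)])
  have I: "((\<lambda>s. (N * \<mu>) * H' (\<tau> - s)) has_integral ((N * \<mu>) * H \<tau> - (N * \<mu>) * H 0)) {0..\<tau>}"
    by (rule ftc_rev) (use ep(5) dH in auto)
  have eqf: "\<nu> * exp (\<delta> * s) * bd_pmf \<alpha> \<beta> (\<tau> - s) (Suc m) = (N * \<mu>) * H' (\<tau> - s)"
    if "s \<in> {0..\<tau>}" for s
  proof -
    define t where "t = \<tau> - s"
    have t: "t \<ge> 0" using that unfolding t_def by simp
    have bd: "bd_pmf \<alpha> \<beta> t (Suc m) = (1 - q) ^ 2 * exp (lam*t) * (exp (lam*t) - 1) ^ m / (exp (lam*t) - q) ^ (m + 2)"
      unfolding q_def lam_def using bd_pmf_Suc[OF assms(3,4) t] by simp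
    have ex: "exp (\<delta> * s) = N * exp (-(\<gamma>*lam)*t)"
    proof -
      have "\<delta> * s = - (- (\<gamma> * lam) * \<tau>) + (-(\<gamma>*lam)*t)" unfolding t_def ep(4) by (simp add: algebra_simps)
      then have "exp (\<delta> * s) = exp (- (- (\<gamma> * lam) * \<tau>)) * exp (-(\<gamma>*lam)*t)"
        by (simp only: exp_add)
      also have "- (- (\<gamma> * lam) * \<tau>) = ln N" unfolding ep(4) \<tau>_def using assms(1) by simp
      then have "exp (- (- (\<gamma> * lam) * \<tau>)) = N" using assms(5) by simp
      finally show ?thesis .
    qed
    have mu: "\<mu> * lam = \<nu> * (1 - q)" unfolding \<mu>_def lam_def q_def using al by (simp add: field_simps)
    have L: "\<nu> * (N * exp (-(\<gamma>*lam)*t)) * ((1 - q) ^ 2 * exp (lam*t) * (exp (lam*t) - 1) ^ m / (exp (lam*t) - q) ^ (m + 2))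
      = N * (\<nu> * (1 - q)) * (1 - q) * (exp (lam*t) * exp (-(\<gamma>*lam)*t) * (exp (lam*t) - 1) ^ m / (exp (lam*t) - q) ^ (m + 2))"
      by (simp add: power2_eq_square mult_ac)
    have R: "(N * \<mu>) * H' t = N * (\<mu> * lam) * (1 - q) * (exp (lam*t) * exp (-(\<gamma>*lam)*t) * (exp (lam*t) - 1) ^ m / (exp (lam*t) - q) ^ (m + 2))"
      unfolding H'_def by (simp add: mult_ac)
    show ?thesis unfolding t_def[symmetric] bd ex L R mu ..
  qed
  have I2: "((\<lambda>s. \<nu> * exp (\<delta> * s) * bd_pmf \<alpha> \<beta> (\<tau> - s) (Suc m)) has_integral ((N * \<mu>) * H \<tau> - (N * \<mu>) * H 0)) {0..\<tau>}"
    using I by (subst has_integral_cong[OF eqf]) auto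
  have v0: "- (N * \<mu>) * H 0 = N * \<mu> * (fact m / pochhammer (\<gamma> + 1) (Suc m))
           * hyp2F1 (real (Suc m)) \<gamma> (1 + \<gamma> + real (Suc m)) q"
  proof -
    have h0: "- H 0 = fact m / pochhammer (\<gamma> + 1) (Suc m) * hyp2F1 (real (Suc m)) \<gamma> (1 + \<gamma> + real (Suc m)) q"
      unfolding H_def by (rule Hk0[OF g q0 q1])
    have "- (N * \<mu>) * H 0 = N * \<mu> * (- H 0)" by simp
    also have "\<dots> = N * \<mu> * (fact m / pochhammer (\<gamma> + 1) (Suc m) * hyp2F1 (real (Suc m)) \<gamma> (1 + \<gamma> + real (Suc m)) q)"
      unfolding h0 ..
    finally show ?thesis by (simp only: mult.assoc)
  qed
  have vT: "(N * \<mu>) * H \<tau> = \<mu> * (\<Sum>j=1..Suc m. real (m choose (j - 1)) * (1 / (real j + \<gamma>))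
               * ((1 - q) / (q - N powr (1/\<gamma>))) ^ j
               * hyp2F1 1 \<gamma> (1 + \<gamma> + real j) (N powr (-1/\<gamma>) * q))"
    unfolding H_def sum_distrib_left
  proof (rule sum.cong[OF refl])
    fix j assume "j \<in> {1..Suc m}"
    have X: "N powr (1/\<gamma>) - q > 0" using ep(2) q1 lam ep(5)
      by (metis diff_gt_0_iff_gt less_le_trans one_le_exp_iff mult_pos_pos less_imp_le)
    have pw: "(-(1-q)) ^ j / (N powr (1/\<gamma>) - q) ^ j = ((1 - q) / (q - N powr (1/\<gamma>))) ^ j"
    proof -
      have "q - N powr (1/\<gamma>) = - (N powr (1/\<gamma>) - q)" by simp
      then have b: "(1 - q) / (q - N powr (1/\<gamma>)) = (-(1-q)) / (N powr (1/\<gamma>) - q)"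
        by (simp only: divide_minus_right minus_divide_left)
      show ?thesis unfolding power_divide[symmetric] b ..
    qed
    have nz: "(N powr (1/\<gamma>) - q) ^ j \<noteq> 0" "real j + \<gamma> \<noteq> 0" "\<gamma> + real j \<noteq> 0" "N \<noteq> 0"
      using X g assms(5) by auto
    have hf: "hfun lam \<gamma> q j \<tau> = (1/N) / (N powr (1/\<gamma>) - q) ^ j * hyp2F1 1 \<gamma> (1 + \<gamma> + real j) (N powr (-1/\<gamma>) * q) / (real j + \<gamma>)"
      unfolding hfun_def ep(1) ep(2) ep(3) by (simp add: mult.commute)
    show "N * \<mu> * (real (m choose (j - 1)) * (- (1 - q)) ^ j * hfun lam \<gamma> q j \<tau>)
      = \<mu> * (real (m choose (j - 1)) * (1 / (real j + \<gamma>)) * ((1 - q) / (q - N powr (1 / \<gamma>))) ^ j *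
           hyp2F1 1 \<gamma> (1 + \<gamma> + real j) (N powr (- 1 / \<gamma>) * q))"
      unfolding hf pw[symmetric] by (rule aux3[OF nz(4)])
  qed
  have e: "(N * \<mu>) * H \<tau> - (N * \<mu>) * H 0 = (N * \<mu>) * H \<tau> + (- (N * \<mu>)) * H 0" by simp
  show ?thesis using I2 unfolding e unfolding vT v0 .
qed

lemma int_0:
  fixes \<delta> \<nu> \<alpha> \<beta> N :: real
  assumes "\<delta> > 0" and "\<nu> > 0" and "\<alpha> > \<beta>" and "\<beta> \<ge> 0" and "N > 1"
  defines "lam \<equiv> \<alpha> - \<beta>"
  defines "q \<equiv> \<beta> / \<alpha>"
  defines "\<gamma> \<equiv> \<delta> / lam"
  defines "\<mu> \<equiv> \<nu> / \<alpha>"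
  defines "\<tau> \<equiv> ln N / \<delta>"
  shows "((\<lambda>s. \<nu> * exp (\<delta> * s) * (bd_xi \<alpha> \<beta> (\<tau> - s) - 1)) has_integral
     (N * \<mu> / \<gamma> * (1 / N * hyp2F1 1 \<gamma> (1 + \<gamma>) (N powr (-1/\<gamma>) * q)
                      - hyp2F1 1 \<gamma> (1 + \<gamma>) q))) {0..\<tau>}"
proof -
  have lam: "lam > 0" unfolding lam_def using assms by simp
  have al: "\<alpha> > 0" using assms by simp
  have g: "\<gamma> > 0" unfolding \<gamma>_def using lam assms by simp
  have q0: "0 \<le> q" and q1: "q < 1" unfolding q_def using assms al by auto
  note ep = endpoints[OF assms(1) lam assms(5), folded \<gamma>_def \<tau>_def]
  define H where "H = hfun lam \<gamma> q 0"
  define H' where "H' t = - lam * exp (lam*t) * exp (-(\<gamma>*lam)*t) / (exp (lam*t) - q) ^ Suc 0" for t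
  have dH: "(H has_real_derivative H' t) (at t)" if "0 \<le> t" "t \<le> \<tau>" for t
    unfolding H_def H'_def by (rule hfun_deriv[OF lam g q0 q1 that(1)])
  have I: "((\<lambda>s. (N * \<mu>) * H' (\<tau> - s)) has_integral ((N * \<mu>) * H \<tau> - (N * \<mu>) * H 0)) {0..\<tau>}"
    by (rule ftc_rev) (use ep(5) dH in auto)
  have eqf: "\<nu> * exp (\<delta> * s) * (bd_xi \<alpha> \<beta> (\<tau> - s) - 1) = (N * \<mu>) * H' (\<tau> - s)"
    if "s \<in> {0..\<tau>}" for s
  proof -
    define t where "t = \<tau> - s"
    have t: "t \<ge> 0" using that unfolding t_def by simp
    have bd: "bd_xi \<alpha> \<beta> t - 1 = - ((1 - q) * exp (lam*t) / (exp (lam*t) - q))"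
      unfolding q_def lam_def using bd_xi_m1[OF assms(3,4) t] by simp
    have ex: "exp (\<delta> * s) = N * exp (-(\<gamma>*lam)*t)"
    proof -
      have "\<delta> * s = - (- (\<gamma> * lam) * \<tau>) + (-(\<gamma>*lam)*t)" unfolding t_def ep(4) by (simp add: algebra_simps)
      then have "exp (\<delta> * s) = exp (- (- (\<gamma> * lam) * \<tau>)) * exp (-(\<gamma>*lam)*t)"
        by (simp only: exp_add)
      also have "- (- (\<gamma> * lam) * \<tau>) = ln N" unfolding ep(4) \<tau>_def using assms(1) by simp
      then have "exp (- (- (\<gamma> * lam) * \<tau>)) = N" using assms(5) by simp
      finally show ?thesis .
    qed
    have mu: "\<mu> * lam = \<nu> * (1 - q)" unfolding \<mu>_def lam_def q_def using al by (simp add: field_simps)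
    have L: "\<nu> * (N * exp (-(\<gamma>*lam)*t)) * (- ((1 - q) * exp (lam*t) / (exp (lam*t) - q)))
      = - (N * (\<nu> * (1 - q)) * (exp (lam*t) * exp (-(\<gamma>*lam)*t) / (exp (lam*t) - q)))"
      by (simp add: mult_ac)
    have R: "(N * \<mu>) * H' t = - (N * (\<mu> * lam) * (exp (lam*t) * exp (-(\<gamma>*lam)*t) / (exp (lam*t) - q)))"
      unfolding H'_def by (simp add: mult_ac)
    show ?thesis unfolding t_def[symmetric] bd ex L R mu ..
  qed
  have I2: "((\<lambda>s. \<nu> * exp (\<delta> * s) * (bd_xi \<alpha> \<beta> (\<tau> - s) - 1)) has_integral ((N * \<mu>) * H \<tau> - (N * \<mu>) * H 0)) {0..\<tau>}"
    using I by (subst has_integral_cong[OF eqf]) auto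
  have H0: "H 0 = hyp2F1 1 \<gamma> (1 + \<gamma>) q / \<gamma>"
    unfolding H_def hfun_def by simp
  have HT: "H \<tau> = 1 / N * hyp2F1 1 \<gamma> (1 + \<gamma>) (N powr (-1/\<gamma>) * q) / \<gamma>"
    unfolding H_def hfun_def ep(1) ep(3) by (simp add: mult.commute)
  have e: "(N * \<mu>) * H \<tau> - (N * \<mu>) * H 0 = N * \<mu> / \<gamma> * (1 / N * hyp2F1 1 \<gamma> (1 + \<gamma>) (N powr (-1/\<gamma>) * q)
                      - hyp2F1 1 \<gamma> (1 + \<gamma>) q)"
    unfolding H0 HT by (simp add: algebra_simps)
  show ?thesis using I2 unfolding e .
qed

lemma int_mass:
  fixes \<delta> \<nu> N :: real
  assumes "\<delta> > 0" "N > 1"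
  shows "((\<lambda>s. \<nu> * exp (\<delta> * s)) has_integral (\<nu> * (N - 1) / \<delta>)) {0..ln N / \<delta>}"
proof -
  have T: "0 \<le> ln N / \<delta>" using assms by simp
  have "((\<lambda>s. \<nu> * exp (\<delta> * s)) has_integral (\<nu> * exp (\<delta> * (ln N / \<delta>)) / \<delta> - \<nu> * exp (\<delta> * 0) / \<delta>)) {0..ln N / \<delta>}"
  proof (rule fundamental_theorem_of_calculus[OF T])
    fix x assume "x \<in> {0..ln N / \<delta>}"
    have "((\<lambda>s. \<nu> * exp (\<delta> * s) / \<delta>) has_real_derivative \<nu> * exp (\<delta> * x)) (at x)"
      using assms by (auto intro!: derivative_eq_intros)
    then show "((\<lambda>s. \<nu> * exp (\<delta> * s) / \<delta>) has_vector_derivative \<nu> * exp (\<delta> * x)) (at x within {0..ln N / \<delta>})"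
      by (simp add: has_real_derivative_iff_has_vector_derivative[symmetric] has_field_derivative_at_within)
  qed
  then show ?thesis using assms by (simp add: diff_divide_distrib right_diff_distrib)
qed

lemma conv_fps: "conv_pow c m n = fps_nth (Abs_fps c ^ m) n"
proof (induction m arbitrary: n)
  case 0
  then show ?case by simp
next
  case (Suc m)
  have "fps_nth (Abs_fps c ^ Suc m) n = fps_nth (Abs_fps c * Abs_fps c ^ m) n" by simp
  also have "\<dots> = (\<Sum>i=0..n. c i * conv_pow c m (n - i))"
    unfolding fps_mult_nth Suc.IH by simp
  finally show ?case by (simp add: atLeast0AtMost)
qed

lemma conv_deriv:
  "real (Suc n) * conv_pow c (Suc m) (Suc n)
   = real (Suc m) * (\<Sum>i\<le>n. conv_pow c m i * (real (Suc n - i) * c (Suc n - i)))"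
proof -
  define C where "C = Abs_fps c"
  have "fps_nth (fps_deriv (C ^ Suc m)) n = real (Suc n) * conv_pow c (Suc m) (Suc n)"
    unfolding fps_deriv_nth conv_fps C_def by (simp only: of_nat_add of_nat_1 Suc_eq_plus1 add.commute)
  then have "real (Suc n) * conv_pow c (Suc m) (Suc n) = fps_nth (fps_deriv (C ^ Suc m)) n" by simp
  also have "fps_deriv (C ^ Suc m) = of_nat (Suc m) * (C ^ m * fps_deriv C)"
    unfolding fps_deriv_power' by (simp add: mult_ac)
  also have "fps_nth (of_nat (Suc m) * (C ^ m * fps_deriv C)) n = real (Suc m) * fps_nth (C ^ m * fps_deriv C) n"
    by (simp add: fps_of_nat[symmetric])
  also have "fps_nth (C ^ m * fps_deriv C) n = (\<Sum>i\<le>n. conv_pow c m i * (real (Suc n - i) * c (Suc n - i)))"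
    unfolding fps_mult_nth atLeast0AtMost conv_fps C_def
    by (rule sum.cong) (auto simp: Suc_diff_le)
  finally show ?thesis .
qed

lemma conv_nonneg: fixes c :: "nat \<Rightarrow> real" assumes "\<And>n. c n \<ge> 0" shows "conv_pow c m n \<ge> 0"
  by (induction m arbitrary: n) (auto intro!: sum_nonneg mult_nonneg_nonneg assms)

definition cs :: "(nat \<Rightarrow> real) \<Rightarrow> real \<Rightarrow> real" where "cs c z = (\<Sum>k. c k * z ^ k)"

lemma c_summ:
  fixes c :: "nat \<Rightarrow> real" and z :: real
  assumes "\<And>n. 0 \<le> c n" "\<And>n. c n \<le> 1" "\<bar>z\<bar> < 1"
  shows "summable (\<lambda>k. norm (c k * z ^ k))"
proof (rule summable_comparison_test[of _ "\<lambda>k. \<bar>z\<bar> ^ k"])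
  show "\<exists>N. \<forall>n\<ge>N. norm (norm (c n * z ^ n)) \<le> \<bar>z\<bar> ^ n"
    using assms by (auto simp: abs_mult power_abs intro!: mult_left_le_one_le)
  show "summable (\<lambda>k. \<bar>z\<bar> ^ k)" using assms by (simp add: summable_geometric)
qed

lemma conv_sums:
  fixes c :: "nat \<Rightarrow> real" and z :: real
  assumes c0: "\<And>n. 0 \<le> c n" and c1: "\<And>n. c n \<le> 1"
  shows "\<bar>z\<bar> < 1 \<Longrightarrow> (\<lambda>n. conv_pow c m n * z ^ n) sums (cs c z ^ m)"
proof (induction m arbitrary: z)
  case 0
  have "(\<lambda>n. conv_pow c 0 n * z ^ n) = (\<lambda>n. if n = 0 then 1 else 0)" by auto
  then show ?case using sums_single[of 0 "\<lambda>_. 1::real"] by simp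
next
  case (Suc m)
  have sa: "summable (\<lambda>k. norm (c k * z ^ k))" using c_summ[OF c0 c1 Suc.prems] .
  have sb: "summable (\<lambda>k. norm (conv_pow c m k * z ^ k))"
  proof -
    have "\<bar>\<bar>z\<bar>\<bar> < 1" using Suc.prems by simp
    from Suc.IH[OF this] have "summable (\<lambda>k. conv_pow c m k * \<bar>z\<bar> ^ k)" by (simp add: sums_iff)
    moreover have "norm (conv_pow c m k * z ^ k) = conv_pow c m k * \<bar>z\<bar> ^ k" for k
      using conv_nonneg[where c=c and m=m and n=k, OF c0] by (simp add: abs_mult power_abs)
    ultimately show ?thesis by simp
  qed
  have cp: "(\<lambda>k. \<Sum>i\<le>k. (c i * z ^ i) * (conv_pow c m (k - i) * z ^ (k - i)))
      sums ((\<Sum>k. c k * z ^ k) * (\<Sum>k. conv_pow c m k * z ^ k))"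
    by (rule Cauchy_product_sums[OF sa sb])
  have e1: "(\<Sum>k. conv_pow c m k * z ^ k) = cs c z ^ m" using Suc.IH[OF Suc.prems] by (simp add: sums_iff)
  have e2: "(\<Sum>i\<le>k. (c i * z ^ i) * (conv_pow c m (k - i) * z ^ (k - i))) = conv_pow c (Suc m) k * z ^ k" for k
  proof -
    have "(\<Sum>i\<le>k. (c i * z ^ i) * (conv_pow c m (k - i) * z ^ (k - i))) = (\<Sum>i\<le>k. c i * conv_pow c m (k - i) * z ^ k)"
    proof (rule sum.cong[OF refl])
      fix i assume "i \<in> {..k}"
      then have "z ^ i * z ^ (k - i) = z ^ k" by (simp add: power_add[symmetric])
      then show "(c i * z ^ i) * (conv_pow c m (k - i) * z ^ (k - i)) = c i * conv_pow c m (k - i) * z ^ k"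
        by (metis mult.assoc mult.left_commute)
    qed
    then show ?thesis by (simp add: sum_distrib_right)
  qed
  show ?case using cp unfolding e1 e2 by (simp add: cs_def)
qed

lemma conv_le:
  fixes c :: "nat \<Rightarrow> real"
  assumes c0: "\<And>n. 0 \<le> c n" and c1: "\<And>n. c n \<le> 1"
  shows "conv_pow c m n \<le> cs c (1/2) ^ m * 2 ^ n"
proof -
  have s: "(\<lambda>k. conv_pow c m k * (1/2) ^ k) sums (cs c (1/2) ^ m)" by (rule conv_sums[OF c0 c1]) simp
  have "conv_pow c m n * (1/2) ^ n \<le> cs c (1/2) ^ m"
    using sum_le_suminf[OF sums_summable[OF s], of "{n}"] sums_unique[OF s] conv_nonneg[OF c0] by simp
  then show ?thesis by (simp add: field_simps)
qed

lemma wsums: fixes M x :: real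
  shows "(\<lambda>m. exp (-M) * M ^ m / fact m * x ^ m) sums exp (M * (x - 1))"
proof -
  have "(\<lambda>m. exp (-M) * ((M * x) ^ m /\<^sub>R fact m)) sums (exp (-M) * exp (M * x))"
    by (rule sums_mult[OF exp_converges])
  moreover have "exp (-M) * exp (M * x) = exp (M * (x - 1))" by (simp add: exp_add[symmetric] algebra_simps)
  ultimately show ?thesis by (simp add: power_mult_distrib divide_inverse mult_ac)
qed

lemma pgf:
  fixes c :: "nat \<Rightarrow> real" and M z :: real
  assumes c0: "\<And>n. 0 \<le> c n" and c1: "\<And>n. c n \<le> 1" and M: "M \<ge> 0" and z: "\<bar>z\<bar> < 1"
  defines "w \<equiv> (\<lambda>m. exp (-M) * M ^ m / fact m)"
  defines "p \<equiv> (\<lambda>n. \<Sum>m. w m * conv_pow c m n)"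
  shows "(\<lambda>n. p n * z ^ n) sums exp (M * (cs c z - 1))"
proof -
  have w0: "w m \<ge> 0" for m unfolding w_def using M by simp
  have az: "\<bar>\<bar>z\<bar>\<bar> < 1" using z by simp
  define f where "f m n = w m * conv_pow c m n * z ^ n" for m n
  have nf: "norm (f m n) = w m * conv_pow c m n * \<bar>z\<bar> ^ n" for m n
    unfolding f_def using w0[of m] conv_nonneg[where c=c and m=m and n=n, OF c0]
    by (simp add: abs_mult power_abs)
  have rowabs: "(\<lambda>n. norm (f m n)) sums (w m * cs c \<bar>z\<bar> ^ m)" for m
    unfolding nf using sums_mult[OF conv_sums[where m=m, OF c0 c1 az], of "w m"] by (simp add: mult.assoc)
  have row: "((\<lambda>n. f m n) has_sum (w m * cs c z ^ m)) UNIV" for m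
  proof (rule norm_summable_imp_has_sum)
    show "summable (\<lambda>n. norm (f m n))" using rowabs[of m] by (simp add: sums_iff)
    show "(\<lambda>n. f m n) sums (w m * cs c z ^ m)"
      unfolding f_def using sums_mult[OF conv_sums[where m=m, OF c0 c1 z], of "w m"] by (simp add: mult.assoc)
  qed
  have col: "((\<lambda>m. f m n) has_sum (p n * z ^ n)) UNIV" for n
  proof -
    have sm: "summable (\<lambda>m. w m * conv_pow c m n)"
    proof (rule summable_comparison_test[of _ "\<lambda>m. 2 ^ n * (w m * cs c (1/2) ^ m)"])
      show "\<exists>N. \<forall>m\<ge>N. norm (w m * conv_pow c m n) \<le> 2 ^ n * (w m * cs c (1/2) ^ m)"
      proof (intro exI allI impI)
        fix m :: nat
        have "norm (w m * conv_pow c m n) = w m * conv_pow c m n"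
          using w0[of m] conv_nonneg[where c=c and m=m and n=n, OF c0] by simp
        also have "\<dots> \<le> w m * (cs c (1/2) ^ m * 2 ^ n)"
          by (rule mult_left_mono[OF conv_le[OF c0 c1] w0])
        finally show "norm (w m * conv_pow c m n) \<le> 2 ^ n * (w m * cs c (1/2) ^ m)" by (simp add: mult_ac)
      qed
      show "summable (\<lambda>m. 2 ^ n * (w m * cs c (1 / 2) ^ m))"
        using wsums[of M "cs c (1/2)"] unfolding w_def by (intro summable_mult) (simp add: sums_iff)
    qed
    have "((\<lambda>m. w m * conv_pow c m n) has_sum p n) UNIV"
      unfolding p_def
      by (rule sums_nonneg_imp_has_sum[OF summable_sums[OF sm]])
         (use w0 conv_nonneg[where c=c, OF c0] in auto)
    from has_sum_cmult_left[OF this, of "z ^ n"] show ?thesis unfolding f_def .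
  qed
  have Fabs: "(\<lambda>x. norm ((\<lambda>(m, n). f m n) x)) summable_on (UNIV \<times> UNIV)"
  proof -
    have "(\<lambda>x. norm ((\<lambda>(m, n). f m n) x)) summable_on Sigma UNIV (\<lambda>_. UNIV)"
    proof (subst Infinite_Sum.abs_summable_on_Sigma_iff, intro conjI ballI)
      fix m :: nat
      show "(\<lambda>y. norm ((\<lambda>(m, n). f m n) (m, y))) summable_on UNIV"
        using rowabs[of m] by (auto intro!: summable_nonneg_imp_summable_on simp: sums_iff)
    next
      have ev: "infsum (\<lambda>n. norm (f m n)) UNIV = w m * cs c \<bar>z\<bar> ^ m" for m
        by (rule infsumI, rule sums_nonneg_imp_has_sum[OF rowabs]) simp
      have "summable (\<lambda>m. w m * cs c \<bar>z\<bar> ^ m)"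
        using wsums[of M "cs c \<bar>z\<bar>"] unfolding w_def by (simp add: sums_iff)
      moreover have "0 \<le> cs c \<bar>z\<bar>"
        unfolding cs_def using c0 summable_norm_cancel[OF c_summ[OF c0 c1 az]] by (intro suminf_nonneg) auto
      ultimately have sw: "(\<lambda>m. norm (w m * cs c \<bar>z\<bar> ^ m)) summable_on UNIV"
        using w0 by (auto intro!: summable_nonneg_imp_summable_on)
      show "(\<lambda>x. norm (infsum (\<lambda>n. norm ((\<lambda>(m, n). f m n) (x, n))) UNIV)) summable_on UNIV"
        using sw ev by simp
    qed
    then show ?thesis by simp
  qed
  have Fs: "(\<lambda>(m, n). f m n) summable_on (UNIV \<times> UNIV)" by (rule abs_summable_summable[OF Fabs])
  have swap: "infsum (\<lambda>m. infsum (\<lambda>n. f m n) UNIV) UNIV = infsum (\<lambda>n. infsum (\<lambda>m. f m n) UNIV) UNIV"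
    by (rule infsum_swap_banach[OF Fs])
  have L: "infsum (\<lambda>m. infsum (\<lambda>n. f m n) UNIV) UNIV = exp (M * (cs c z - 1))"
  proof -
    have "infsum (\<lambda>m. infsum (\<lambda>n. f m n) UNIV) UNIV = infsum (\<lambda>m. w m * cs c z ^ m) UNIV"
      using infsumI[OF row] by simp
    also have "\<dots> = exp (M * (cs c z - 1))"
    proof (rule infsumI, rule norm_summable_imp_has_sum)
      have "norm (w m * cs c z ^ m) = w m * \<bar>cs c z\<bar> ^ m" for m using w0[of m] by (simp add: abs_mult power_abs)
      then show "summable (\<lambda>m. norm (w m * cs c z ^ m))"
        using wsums[of M "\<bar>cs c z\<bar>"] unfolding w_def by (simp add: sums_iff)
      show "(\<lambda>m. w m * cs c z ^ m) sums exp (M * (cs c z - 1))" unfolding w_def by (rule wsums)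
    qed
    finally show ?thesis .
  qed
  have R: "infsum (\<lambda>m. f m n) UNIV = p n * z ^ n" for n using infsumI[OF col] by simp
  have Ss: "(\<lambda>n. infsum (\<lambda>m. f m n) UNIV) summable_on UNIV"
  proof -
    have "(\<lambda>(n, m). f m n) summable_on (UNIV \<times> UNIV)"
      using Fs summable_on_swap[of "\<lambda>(m, n). f m n" UNIV UNIV] by simp
    then show ?thesis using summable_on_Sigma_banach[of "\<lambda>n m. f m n" UNIV "\<lambda>_. UNIV"] by simp
  qed
  have "((\<lambda>n. p n * z ^ n) has_sum exp (M * (cs c z - 1))) UNIV"
    using Ss swap L unfolding R by (metis has_sum_infsum)
  then show ?thesis by (rule has_sum_imp_sums)
qed

lemma col_summable:
  fixes c :: "nat \<Rightarrow> real" and M :: real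
  assumes c0: "\<And>n. 0 \<le> c n" and c1: "\<And>n. c n \<le> 1" and M: "M \<ge> 0"
  shows "summable (\<lambda>m. exp (-M) * M ^ m / fact m * conv_pow c m n)"
proof (rule summable_comparison_test[of _ "\<lambda>m. 2 ^ n * (exp (-M) * M ^ m / fact m * cs c (1/2) ^ m)"])
  show "\<exists>N. \<forall>m\<ge>N. norm (exp (-M) * M ^ m / fact m * conv_pow c m n) \<le> 2 ^ n * (exp (-M) * M ^ m / fact m * cs c (1/2) ^ m)"
  proof (intro exI allI impI)
    fix m :: nat
    have w0: "exp (-M) * M ^ m / fact m \<ge> 0" using M by simp
    have "norm (exp (-M) * M ^ m / fact m * conv_pow c m n) = exp (-M) * M ^ m / fact m * conv_pow c m n"
    proof -
      have "0 \<le> exp (-M) * M ^ m / fact m * conv_pow c m n"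
        by (rule mult_nonneg_nonneg[OF w0 conv_nonneg[where c=c and m=m and n=n, OF c0]])
      then show ?thesis by (simp only: real_norm_def abs_of_nonneg)
    qed
    also have "\<dots> \<le> exp (-M) * M ^ m / fact m * (cs c (1/2) ^ m * 2 ^ n)"
      by (rule mult_left_mono[OF conv_le[OF c0 c1] w0])
    finally show "norm (exp (-M) * M ^ m / fact m * conv_pow c m n) \<le> 2 ^ n * (exp (-M) * M ^ m / fact m * cs c (1/2) ^ m)"
      by (simp add: mult_ac)
  qed
  show "summable (\<lambda>m. 2 ^ n * (exp (-M) * M ^ m / fact m * cs c (1 / 2) ^ m))"
    using wsums[of M "cs c (1/2)"] by (intro summable_mult) (simp add: sums_iff)
qed

lemma abstract_main:
  fixes c :: "nat \<Rightarrow> real" and M :: real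
  assumes c0: "\<And>n. 0 \<le> c n" and c1: "\<And>n. c n \<le> 1" and M: "M \<ge> 0"
    and p_def: "p = (\<lambda>n. \<Sum>m. exp (-M) * M ^ m / fact m * conv_pow c m n)"
    and Q_def: "Q = (\<lambda>k::nat. if k = 0 then M * (c 0 - 1) else M * c k)"
  shows "(\<forall>z::real. \<bar>z\<bar> < 1 \<longrightarrow> (\<lambda>k. Q k * z ^ k) sums ln (\<Sum>n. p n * z ^ n))"
    and "p 0 = exp (Q 0)"
    and "\<forall>n\<ge>1. p n = 1 / real n * (\<Sum>k<n. real (n - k) * Q (n - k) * p k)"
proof -
  define w where "w m = exp (-M) * M ^ m / fact m" for m
  have pw: "p = (\<lambda>n. \<Sum>m. w m * conv_pow c m n)" unfolding p_def w_def ..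
  have pgf': "(\<lambda>n. p n * z ^ n) sums exp (M * (cs c z - 1))" if "\<bar>z\<bar> < 1" for z
    unfolding p_def by (rule pgf[OF c0 c1 M that])
  show "\<forall>z::real. \<bar>z\<bar> < 1 \<longrightarrow> (\<lambda>k. Q k * z ^ k) sums ln (\<Sum>n. p n * z ^ n)"
  proof (intro allI impI)
    fix z :: real assume z: "\<bar>z\<bar> < 1"
    have "(\<Sum>n. p n * z ^ n) = exp (M * (cs c z - 1))" using sums_unique[OF pgf'[OF z]] by simp
    then have l: "ln (\<Sum>n. p n * z ^ n) = M * (cs c z - 1)" by simp
    have s1: "(\<lambda>k. M * (c k * z ^ k)) sums (M * cs c z)"
      unfolding cs_def by (rule sums_mult, rule summable_sums, rule summable_norm_cancel, rule c_summ[OF c0 c1 z])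
    have s2: "(\<lambda>k. if k = 0 then M else 0) sums M" using sums_single[of 0 "\<lambda>_. M"] by simp
    have "(\<lambda>k. M * (c k * z ^ k) - (if k = 0 then M else 0)) sums (M * cs c z - M)"
      by (rule sums_diff[OF s1 s2])
    moreover have "(\<lambda>k. M * (c k * z ^ k) - (if k = 0 then M else 0)) = (\<lambda>k. Q k * z ^ k)"
      unfolding Q_def by (auto simp: algebra_simps)
    ultimately show "(\<lambda>k. Q k * z ^ k) sums ln (\<Sum>n. p n * z ^ n)" unfolding l by (simp add: algebra_simps)
  qed
  show "p 0 = exp (Q 0)"
  proof -
    have "(\<lambda>n. p n * 0 ^ n) sums exp (M * (cs c 0 - 1))" by (rule pgf') simp
    then have "p 0 = exp (M * (cs c 0 - 1))" by simp
    moreover have "cs c 0 = c 0" unfolding cs_def by (rule powser_zero)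
    ultimately show ?thesis unfolding Q_def by simp
  qed
  show "\<forall>n\<ge>1. p n = 1 / real n * (\<Sum>k<n. real (n - k) * Q (n - k) * p k)"
  proof (intro allI impI)
    fix n :: nat assume "n \<ge> 1"
    then obtain n' where n: "n = Suc n'" by (cases n) auto
    define K where "K i = M * real (Suc n' - i) * c (Suc n' - i)" for i
    define s where "s m = w m * conv_pow c m (Suc n')" for m
    have ps: "(\<lambda>m. w m * conv_pow c m i) sums p i" for i
      unfolding pw w_def by (rule summable_sums, rule col_summable[OF c0 c1 M])
    have S: "(\<lambda>m. \<Sum>i\<le>n'. K i * (w m * conv_pow c m i)) sums (\<Sum>i\<le>n'. K i * p i)"
      by (rule sums_sum, rule sums_mult, rule ps)
    have eq: "(\<Sum>i\<le>n'. K i * (w m * conv_pow c m i)) = real (Suc n') * s (Suc m)" for m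
    proof -
      have nz: "real (Suc m) \<noteq> 0" "(fact m :: real) \<noteq> 0" by simp_all
      have ws: "w (Suc m) * real (Suc m) = M * w m" unfolding w_def fact_Suc
        using nz by (simp add: field_simps del: of_nat_Suc)
      have "real (Suc n') * s (Suc m) = w (Suc m) * (real (Suc n') * conv_pow c (Suc m) (Suc n'))"
        unfolding s_def by (simp add: mult_ac)
      also have "\<dots> = (w (Suc m) * real (Suc m)) * (\<Sum>i\<le>n'. conv_pow c m i * (real (Suc n' - i) * c (Suc n' - i)))"
        unfolding conv_deriv by (simp add: mult_ac)
      also have "\<dots> = (\<Sum>i\<le>n'. K i * (w m * conv_pow c m i))"
        unfolding ws K_def sum_distrib_left by (rule sum.cong) (simp_all add: mult_ac)
      finally show ?thesis by simp
    qed
    have "(\<lambda>m. s (Suc m)) sums ((\<Sum>i\<le>n'. K i * p i) / real (Suc n'))"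
      using sums_divide[OF S, of "real (Suc n')"] unfolding eq by simp
    then have "s sums ((\<Sum>i\<le>n'. K i * p i) / real (Suc n') + s 0)" by (simp add: sums_Suc_iff)
    moreover have "s 0 = 0" unfolding s_def by simp
    moreover have "s sums p (Suc n')" unfolding s_def by (rule ps)
    ultimately have "p (Suc n') = (\<Sum>i\<le>n'. K i * p i) / real (Suc n')"
      using sums_unique2 by fastforce
    moreover have "(\<Sum>k<Suc n'. real (Suc n' - k) * Q (Suc n' - k) * p k) = (\<Sum>i\<le>n'. K i * p i)"
      unfolding lessThan_Suc_atMost Q_def K_def by (rule sum.cong) auto
    ultimately show "p n = 1 / real n * (\<Sum>k<n. real (n - k) * Q (n - k) * p k)"
      unfolding n by simp
  qed
qed

theorem mainTheorem4:
  fixes \<delta> \<nu> \<alpha> \<beta> N :: real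
  assumes "\<delta> > 0" and "\<nu> > 0" and "\<alpha> > \<beta>" and "\<beta> \<ge> 0" and "N > 1"
  defines "lam \<equiv> \<alpha> - \<beta>"
  defines "q \<equiv> \<beta> / \<alpha>"
  defines "\<gamma> \<equiv> \<delta> / lam"
  defines "\<mu> \<equiv> \<nu> / \<alpha>"
  defines "\<tau> \<equiv> ln N / \<delta>"
  defines "p \<equiv> B_pmf \<delta> \<nu> \<alpha> \<beta> \<tau>"
  defines "qc \<equiv> (\<lambda>k::nat.
     if k = 0 then
       N * \<mu> / \<gamma> * (1 / N * hyp2F1 1 \<gamma> (1 + \<gamma>) (N powr (-1/\<gamma>) * q)
                      - hyp2F1 1 \<gamma> (1 + \<gamma>) q)
     else
       \<mu> * (\<Sum>j=1..k. real ((k - 1) choose (j - 1)) * (1 / (real j + \<gamma>))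
               * ((1 - q) / (q - N powr (1/\<gamma>))) ^ j
               * hyp2F1 1 \<gamma> (1 + \<gamma> + real j) (N powr (-1/\<gamma>) * q))
       + N * \<mu> * (fact (k - 1) / pochhammer (\<gamma> + 1) k)
           * hyp2F1 (real k) \<gamma> (1 + \<gamma> + real k) q)"
  shows "(\<exists>r>0. \<forall>z::real. \<bar>z\<bar> < r \<longrightarrow>
            (\<lambda>k. qc k * z ^ k) sums ln (\<Sum>n. p n * z ^ n))
         \<and> p 0 = exp (qc 0)
         \<and> (\<forall>n\<ge>1. p n = 1 / real n * (\<Sum>k<n. real (n - k) * qc (n - k) * p k))"
proof -
  have lam: "lam > 0" unfolding lam_def using assms by simp
  have al: "\<alpha> > 0" using assms by simp
  define M where "M = mut_mass \<delta> \<nu> \<tau>"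
  define c where "c = clone_pmf \<delta> \<nu> \<alpha> \<beta> \<tau>"
  define g where "g n s = \<nu> * exp (\<delta> * s) * bd_pmf \<alpha> \<beta> (\<tau> - s) n" for n s
  have tau0: "\<tau> > 0" unfolding \<tau>_def using assms by simp
  have Im: "((\<lambda>s. \<nu> * exp (\<delta> * s)) has_integral (\<nu> * (N - 1) / \<delta>)) {0..\<tau>}"
    unfolding \<tau>_def by (rule int_mass[OF assms(1) assms(5)])
  have Mv: "M = \<nu> * (N - 1) / \<delta>" unfolding M_def mut_mass_def by (rule integral_unique[OF Im])
  have M0: "M > 0" unfolding Mv using assms by simp
  have Ig: "(g n has_integral (if n = 0 then qc 0 + M else qc n)) {0..\<tau>}" for n
  proof (cases n)
    case 0
    have I0: "((\<lambda>s. \<nu> * exp (\<delta> * s) * (bd_xi \<alpha> \<beta> (\<tau> - s) - 1)) has_integral qc 0) {0..\<tau>}"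
      using int_0[OF assms(1-5), folded lam_def q_def \<gamma>_def \<mu>_def \<tau>_def] unfolding qc_def by simp
    have "((\<lambda>s. \<nu> * exp (\<delta> * s) * (bd_xi \<alpha> \<beta> (\<tau> - s) - 1) + \<nu> * exp (\<delta> * s)) has_integral (qc 0 + M)) {0..\<tau>}"
      using has_integral_add[OF I0 Im] unfolding Mv .
    moreover have "(\<lambda>s. \<nu> * exp (\<delta> * s) * (bd_xi \<alpha> \<beta> (\<tau> - s) - 1) + \<nu> * exp (\<delta> * s)) = g 0"
      unfolding g_def bd_pmf_def by (auto simp: algebra_simps)
    ultimately show ?thesis using 0 by simp
  next
    case (Suc m)
    have "(g (Suc m) has_integral qc (Suc m)) {0..\<tau>}"
      using int_Suc[OF assms(1-5), of m, folded lam_def q_def \<gamma>_def \<mu>_def \<tau>_def]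
      unfolding g_def qc_def by (simp only: nat.distinct if_False diff_Suc_1)
    then show ?thesis using Suc by simp
  qed
  define I where "I n = (if n = 0 then qc 0 + M else qc n)" for n
  have cI: "c n = I n / M" for n
    unfolding c_def clone_pmf_def M_def[symmetric] using integral_unique[OF Ig[of n]]
    unfolding g_def I_def by simp
  have gnn: "0 \<le> g n s" "g n s \<le> \<nu> * exp (\<delta> * s)" if "s \<in> {0..\<tau>}" for n s
  proof -
    have t: "\<tau> - s \<ge> 0" using that by simp
    note b = bd_pmf_bounds[OF assms(3,4) t, of n]
    show "0 \<le> g n s" unfolding g_def using b assms by simp
    show "g n s \<le> \<nu> * exp (\<delta> * s)" unfolding g_def using b assms
      by (simp add: mult_left_le)
  qed
  have c0: "0 \<le> c n" for n
  proof -
    have "0 \<le> I n" by (rule has_integral_nonneg[OF Ig[of n, folded I_def[of n]] gnn(1)])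
    then show ?thesis unfolding cI using M0 by simp
  qed
  have c1: "c n \<le> 1" for n
  proof -
    have "I n \<le> M" using has_integral_le[OF Ig[of n, folded I_def[of n]] Im gnn(2)] unfolding Mv .
    then show ?thesis unfolding cI using M0 by simp
  qed
  have Qeq: "(\<lambda>k::nat. if k = 0 then M * (c 0 - 1) else M * c k) = qc"
  proof
    fix k :: nat
    show "(if k = 0 then M * (c 0 - 1) else M * c k) = qc k"
      unfolding cI I_def using M0 by (auto simp: field_simps)
  qed
  have pe: "p = (\<lambda>n. \<Sum>m. exp (-M) * M ^ m / fact m * conv_pow c m n)"
    unfolding p_def B_pmf_def M_def c_def ..
  note AM = abstract_main[OF c0 c1 less_imp_le[OF M0] pe Qeq[symmetric]]
  show ?thesis
  proof (intro conjI)
    show "\<exists>r>0. \<forall>z::real. \<bar>z\<bar> < r \<longrightarrow> (\<lambda>k. qc k * z ^ k) sums ln (\<Sum>n. p n * z ^ n)"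
      using AM(1) by (intro exI[of _ 1]) simp
    show "p 0 = exp (qc 0)" by (rule AM(2))
    show "\<forall>n\<ge>1. p n = 1 / real n * (\<Sum>k<n. real (n - k) * qc (n - k) * p k)" by (rule AM(3))
  qed
qed

end
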